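(* For every metric space $M$, $\dim_{\mathrm{MST}}(M)=\dim_{\mathrm{Box}}(M)$.
   Context: A minimal spanning tree (MST) on a finite set of points in a metric space is a spanning tree of the complete graph on those points that minimizes the sum of the edge lengths; for an edge $e$, $\|e\|$ is the distance between its endpoints, and for a tree $T$ and $d\ge 0$, $E_d(T)=\sum_{e\in T}\|e\|^d$. The MST dimension is \[ \dim_{\mathrm{MST}}(M):=\inf\{d\ge 0:\ \exists C<\infty \text{ such that } E_d(T)\le C \text{ for every MST } T \text{ on any finite set of distinct points of } M\}, \] with $\inf\emptyset=\infty$. For $\epsilon>0$ let $N(\epsilon)\in\{0,1,2,\dots\}\cup\{\infty\}$ be the maximal number of pairwise disjoint open balls of radius $\epsilon$ centered at points of $M$. The upper box dimension is \[ \dim_{\mathrm{Box}}(M):=\limsup_{\epsilon\to0}\frac{\log N(\epsilon)}{\log(1/\epsilon)}. \] *)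

theory Defs
  imports "HOL-Analysis.Analysis"
begin

definition edge_len :: "'a::metric_space set \<Rightarrow> real" where
  "edge_len e = (THE d. \<exists>x y. e = {x, y} \<and> d = dist x y)"

definition edge_rel :: "'a set set \<Rightarrow> ('a \<times> 'a) set" where
  "edge_rel T = {(u, v). {u, v} \<in> T}"

text \<open>A spanning tree of the complete graph on the vertex set P: a set of edges between
  distinct points of P which is connected on P and acyclic (no edge lies on a cycle,
  i.e. the endpoints of an edge e are not joined by a path in T - {e}).\<close>

definition is_spanning_tree :: "'a set \<Rightarrow> 'a set set \<Rightarrow> bool" where
  "is_spanning_tree P T \<longleftrightarrow>
     T \<subseteq> {{x, y} | x y. x \<in> P \<and> y \<in> P \<and> x \<noteq> y} \<and>
     (\<forall>x\<in>P. \<forall>y\<in>P. (x, y) \<in> (edge_rel T)\<^sup>*) \<and>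
     (\<forall>e\<in>T. \<forall>x y. e = {x, y} \<longrightarrow> (x, y) \<notin> (edge_rel (T - {e}))\<^sup>*)"

definition tree_weight :: "'a::metric_space set set \<Rightarrow> real" where
  "tree_weight T = (\<Sum>e\<in>T. edge_len e)"

definition is_MST :: "'a::metric_space set \<Rightarrow> 'a set set \<Rightarrow> bool" where
  "is_MST P T \<longleftrightarrow> is_spanning_tree P T \<and>
     (\<forall>T'. is_spanning_tree P T' \<longrightarrow> tree_weight T \<le> tree_weight T')"

definition E_pow :: "real \<Rightarrow> 'a::metric_space set set \<Rightarrow> real" where
  "E_pow d T = (\<Sum>e\<in>T. edge_len e powr d)"

text \<open>MST dimension of a metric space S (a subset of a metric space type, with the
  induced metric); Inf of the empty set of ereals is \<infinity>.\<close>

definition dim_MST :: "'a::metric_space set \<Rightarrow> ereal" where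
  "dim_MST S = Inf (ereal ` {d. d \<ge> 0 \<and> (\<exists>C. \<forall>P T. finite P \<and> P \<subseteq> S \<and> is_MST P T \<longrightarrow> E_pow d T \<le> C)})"

text \<open>Maximal number of pairwise disjoint open balls of radius \<open>\<epsilon>\<close> centred in S
  (\<infinity> if there is no maximum).\<close>

definition packing_number :: "'a::metric_space set \<Rightarrow> real \<Rightarrow> enat" where
  "packing_number S \<epsilon> = Sup {enat (card A) | A. finite A \<and> A \<subseteq> S \<and>
       (\<forall>x\<in>A. \<forall>y\<in>A. x \<noteq> y \<longrightarrow> ball x \<epsilon> \<inter> ball y \<epsilon> = {})}"

definition box_ratio :: "'a::metric_space set \<Rightarrow> real \<Rightarrow> ereal" where
  "box_ratio S \<epsilon> = (case packing_number S \<epsilon> of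
       \<infinity> \<Rightarrow> \<infinity>
     | enat n \<Rightarrow> ereal (ln (real n) / ln (1 / \<epsilon>)))"

definition dim_Box :: "'a::metric_space set \<Rightarrow> ereal" where
  "dim_Box S = Limsup (at_right 0) (box_ratio S)"

end

theory Submission
  imports Defs
begin

abbreviation edges_of :: "'a set \<Rightarrow> 'a set set" where
  "edges_of P \<equiv> {{x, y} | x y. x \<in> P \<and> y \<in> P \<and> x \<noteq> y}"

definition conn :: "'a set \<Rightarrow> 'a set set \<Rightarrow> bool" where
  "conn P H \<longleftrightarrow> (\<forall>x\<in>P. \<forall>y\<in>P. (x, y) \<in> (edge_rel H)\<^sup>*)"

lemma edge_len_eq: "edge_len {x, y} = dist x y"
proof -
  have "(THE d. \<exists>x' y'. {x, y} = {x', y'} \<and> d = dist x' y') = dist x y"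
  proof (rule the_equality)
    show "\<exists>x' y'. {x, y} = {x', y'} \<and> dist x y = dist x' y'" by blast
  next
    fix d assume "\<exists>x' y'. {x, y} = {x', y'} \<and> d = dist x' y'"
    then obtain x' y' where "{x, y} = {x', y'}" "d = dist x' y'" by blast
    then show "d = dist x y" by (metis doubleton_eq_iff dist_commute)
  qed
  then show ?thesis unfolding edge_len_def .
qed

lemma edge_rel_sym: "sym (edge_rel T)"
  unfolding edge_rel_def sym_def by (auto simp: insert_commute)

lemma rt_sym: "(u, v) \<in> (edge_rel T)\<^sup>* \<Longrightarrow> (v, u) \<in> (edge_rel T)\<^sup>*"
  by (rule symD[OF sym_rtrancl[OF edge_rel_sym]])

lemma edge_rel_mono: "A \<subseteq> B \<Longrightarrow> edge_rel A \<subseteq> edge_rel B"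
  unfolding edge_rel_def by auto

lemma rt_mono: "A \<subseteq> B \<Longrightarrow> (u, v) \<in> (edge_rel A)\<^sup>* \<Longrightarrow> (u, v) \<in> (edge_rel B)\<^sup>*"
  using rtrancl_mono[OF edge_rel_mono] by blast

lemma rt_edge: "{u, v} \<in> A \<Longrightarrow> (u, v) \<in> (edge_rel A)\<^sup>*"
  unfolding edge_rel_def by auto

lemma prefix_lemma:
  assumes "(u, v) \<in> (edge_rel A)\<^sup>*"
  shows "(u, v) \<in> (edge_rel (A - {{x, y}}))\<^sup>* \<or> (u, x) \<in> (edge_rel (A - {{x, y}}))\<^sup>*
         \<or> (u, y) \<in> (edge_rel (A - {{x, y}}))\<^sup>*"
  using assms
proof (induction rule: rtrancl_induct)
  case base
  then show ?case by simp
next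
  case (step v w)
  then have vw: "{v, w} \<in> A" unfolding edge_rel_def by auto
  show ?case
  proof (cases "{v, w} = {x, y}")
    case True
    then have "v = x \<or> v = y" by (metis doubleton_eq_iff)
    with step.IH show ?thesis by blast
  next
    case False
    then have "(v, w) \<in> edge_rel (A - {{x, y}})" using vw unfolding edge_rel_def by auto
    with step.IH show ?thesis by (meson rtrancl.rtrancl_into_rtrancl)
  qed
qed

lemma rel_sub_rt:
  assumes "\<And>u v. {u, v} \<in> A \<Longrightarrow> (u, v) \<in> (edge_rel B)\<^sup>*"
  shows "(edge_rel A)\<^sup>* \<subseteq> (edge_rel B)\<^sup>*"
proof -
  have "edge_rel A \<subseteq> (edge_rel B)\<^sup>*" using assms unfolding edge_rel_def by auto
  then have "(edge_rel A)\<^sup>* \<subseteq> ((edge_rel B)\<^sup>*)\<^sup>*" by (rule rtrancl_mono)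
  then show ?thesis by simp
qed

lemma finite_edges_of: "finite P \<Longrightarrow> finite (edges_of P)"
proof -
  assume "finite P"
  have "edges_of P \<subseteq> (\<lambda>(x, y). {x, y}) ` (P \<times> P)" by auto
  moreover have "finite ((\<lambda>(x, y). {x, y}) ` (P \<times> P))" using \<open>finite P\<close> by simp
  ultimately show ?thesis by (rule finite_subset)
qed

lemma lemma_D:
  assumes "finite F" "F \<subseteq> edges_of P"
  shows "R \<subseteq> P \<Longrightarrow> finite R \<Longrightarrow> (\<forall>p\<in>P. \<exists>r\<in>R. (p, r) \<in> (edge_rel F)\<^sup>*) \<Longrightarrow> card P \<le> card R + card F"
  using assms
proof (induction F arbitrary: R rule: finite_induct)
  case empty
  have "P \<subseteq> R"
  proof
    fix p assume "p \<in> P"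
    then obtain r where "r \<in> R" "(p, r) \<in> (edge_rel {})\<^sup>*" using empty by blast
    moreover have "edge_rel {} = {}" unfolding edge_rel_def by auto
    ultimately show "p \<in> R" unfolding edge_rel_def by auto
  qed
  then show ?case using empty(1,2) card_mono by simp
next
  case (insert e F0)
  obtain x y where e: "e = {x, y}" "x \<in> P" "y \<in> P" "x \<noteq> y" using insert.prems(4) by auto
  have cF: "card (insert e F0) = card F0 + 1" using insert.hyps by simp
  have F0sub: "F0 \<subseteq> edges_of P" using insert.prems(4) by auto
  have gen: "card P \<le> card R + card (insert e F0)"
    if ab: "{a, b} = e" "a \<in> P" "b \<in> P" and ra: "\<exists>r\<in>R. (a, r) \<in> (edge_rel F0)\<^sup>*" for a b
  proof -
    have ba: "{b, a} = e" using ab(1) by (simp add: insert_commute)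
    have F0e: "insert e F0 - {{b, a}} = F0" unfolding ba using insert.hyps(2) by simp
    obtain r0 where r0: "r0 \<in> R" "(a, r0) \<in> (edge_rel F0)\<^sup>*" using ra by blast
    have dom: "\<forall>p\<in>P. \<exists>r\<in>insert b R. (p, r) \<in> (edge_rel F0)\<^sup>*"
    proof
      fix p assume "p \<in> P"
      then obtain r where r: "r \<in> R" "(p, r) \<in> (edge_rel (insert e F0))\<^sup>*" using insert.prems(3) by blast
      from prefix_lemma[OF r(2), where x=b and y=a] F0e
      have "(p, r) \<in> (edge_rel F0)\<^sup>* \<or> (p, b) \<in> (edge_rel F0)\<^sup>* \<or> (p, a) \<in> (edge_rel F0)\<^sup>*" by simp
      then show "\<exists>r\<in>insert b R. (p, r) \<in> (edge_rel F0)\<^sup>*"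
      proof (elim disjE)
        assume "(p, r) \<in> (edge_rel F0)\<^sup>*" then show ?thesis using r(1) by blast
      next
        assume "(p, b) \<in> (edge_rel F0)\<^sup>*" then show ?thesis by blast
      next
        assume "(p, a) \<in> (edge_rel F0)\<^sup>*"
        then have "(p, r0) \<in> (edge_rel F0)\<^sup>*" using r0(2) by (rule rtrancl_trans)
        then show ?thesis using r0(1) by blast
      qed
    qed
    have IHres: "card P \<le> card (insert b R) + card F0"
    proof -
      have "insert b R \<subseteq> P" using insert.prems(1) ab(3) by blast
      moreover have "finite (insert b R)" using insert.prems(2) by blast
      ultimately show ?thesis by (rule insert.IH[OF _ _ dom F0sub])
    qed
    have "card (insert b R) \<le> card R + 1" using insert.prems(2) by (simp add: card_insert_if)
    then show ?thesis using IHres cF by linarith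
  qed
  show ?case
  proof (cases "\<exists>r\<in>R. (x, r) \<in> (edge_rel F0)\<^sup>*")
    case True
    then show ?thesis using gen[of x y] e(1,2,3) by blast
  next
    case nx: False
    show ?thesis
    proof (cases "\<exists>r\<in>R. (y, r) \<in> (edge_rel F0)\<^sup>*")
      case True
      moreover have "{y, x} = e" using e(1) by (simp add: insert_commute)
      ultimately show ?thesis using gen[of y x] e(2,3) by blast
    next
      case ny: False
      obtain r where r: "r \<in> R" "(x, r) \<in> (edge_rel (insert e F0))\<^sup>*" using insert.prems(3) e(2) by blast
      have F0e: "insert e F0 - {{x, y}} = F0" unfolding e(1)[symmetric] using insert.hyps(2) by simp
      from prefix_lemma[OF rt_sym[OF r(2)], where x=x and y=y] F0e
      have "(r, x) \<in> (edge_rel F0)\<^sup>* \<or> (r, y) \<in> (edge_rel F0)\<^sup>*" by simp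
      then show ?thesis
      proof
        assume "(r, x) \<in> (edge_rel F0)\<^sup>*"
        then have "(x, r) \<in> (edge_rel F0)\<^sup>*" by (rule rt_sym)
        then show ?thesis using nx r(1) by blast
      next
        assume "(r, y) \<in> (edge_rel F0)\<^sup>*"
        then have "(y, r) \<in> (edge_rel F0)\<^sup>*" by (rule rt_sym)
        then show ?thesis using ny r(1) by blast
      qed
    qed
  qed
qed


lemma edge_len_nonneg: "e \<in> edges_of P \<Longrightarrow> edge_len e \<ge> 0"
  by (auto simp: edge_len_eq)

lemma conn_tree: "is_spanning_tree P T \<Longrightarrow> conn P T"
  unfolding is_spanning_tree_def conn_def by blast

lemma tree_sub: "is_spanning_tree P T \<Longrightarrow> T \<subseteq> edges_of P"
  unfolding is_spanning_tree_def by blast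

lemma tree_bridge: "is_spanning_tree P T \<Longrightarrow> {x, y} \<in> T \<Longrightarrow> (x, y) \<notin> (edge_rel (T - {{x, y}}))\<^sup>*"
  unfolding is_spanning_tree_def by blast

lemma exists_subtree:
  assumes H: "finite H" "H \<subseteq> edges_of P" "conn P H"
  shows "\<exists>T\<subseteq>H. is_spanning_tree P T"
proof -
  define C where "C = {H'. H' \<subseteq> H \<and> conn P H'}"
  have finC: "finite C" unfolding C_def using H(1) by simp
  have neC: "C \<noteq> {}" unfolding C_def using H(3) by blast
  define T where "T = arg_min_on card C"
  have TC: "T \<in> C" and Tmin: "\<not>(\<exists>x\<in>C. card x < card T)"
    using arg_min_if_finite[OF finC neC, of card] unfolding T_def by auto
  have TH: "T \<subseteq> H" and Tc: "conn P T" using TC unfolding C_def by auto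
  have finT: "finite T" using TH H(1) by (rule finite_subset)
  have acyc: "(x, y) \<notin> (edge_rel (T - {e}))\<^sup>*" if e: "e \<in> T" "e = {x, y}" for e x y
  proof
    assume xy: "(x, y) \<in> (edge_rel (T - {e}))\<^sup>*"
    have sub: "(edge_rel T)\<^sup>* \<subseteq> (edge_rel (T - {e}))\<^sup>*"
    proof (rule rel_sub_rt)
      fix u v assume uv: "{u, v} \<in> T"
      show "(u, v) \<in> (edge_rel (T - {e}))\<^sup>*"
      proof (cases "{u, v} = e")
        case True
        then have "(u = x \<and> v = y) \<or> (u = y \<and> v = x)" using e(2) by (simp add: doubleton_eq_iff)
        then show ?thesis
        proof
          assume "u = x \<and> v = y" then show ?thesis using xy by simp
        next
          assume "u = y \<and> v = x" then show ?thesis using rt_sym[OF xy] by simp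
        qed
      next
        case False
        then have "{u, v} \<in> T - {e}" using uv by simp
        then show ?thesis by (rule rt_edge)
      qed
    qed
    have "conn P (T - {e})" using Tc sub unfolding conn_def by blast
    then have "T - {e} \<in> C" using TH unfolding C_def by auto
    moreover have "card (T - {e}) < card T" using finT e(1) by (rule card_Diff1_less)
    ultimately show False using Tmin by blast
  qed
  have "is_spanning_tree P T"
    unfolding is_spanning_tree_def
  proof (intro conjI)
    show "T \<subseteq> edges_of P" using TH H(2) by blast
    show "\<forall>x\<in>P. \<forall>y\<in>P. (x, y) \<in> (edge_rel T)\<^sup>*" using Tc unfolding conn_def .
    show "\<forall>e\<in>T. \<forall>x y. e = {x, y} \<longrightarrow> (x, y) \<notin> (edge_rel (T - {e}))\<^sup>*" using acyc by blast
  qed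
  then show ?thesis using TH by blast
qed

lemma weight_mono:
  assumes "finite H" "T \<subseteq> H" "H \<subseteq> edges_of P"
  shows "tree_weight T \<le> tree_weight H"
  unfolding tree_weight_def
proof (rule sum_mono2[OF assms(1,2)])
  fix e assume "e \<in> H - T"
  then show "0 \<le> edge_len e" using assms(3) edge_len_nonneg by blast
qed

lemma mst_le_conn:
  assumes "is_MST P T" "finite P" "H \<subseteq> edges_of P" "conn P H"
  shows "tree_weight T \<le> tree_weight H"
proof -
  have finH: "finite H" using assms(2,3) finite_edges_of finite_subset by blast
  obtain T' where T': "T' \<subseteq> H" "is_spanning_tree P T'" using exists_subtree[OF finH assms(3,4)] by blast
  have "tree_weight T \<le> tree_weight T'" using assms(1) T'(2) unfolding is_MST_def by blast
  also have "\<dots> \<le> tree_weight H" using weight_mono[OF finH T'(1) assms(3)] .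
  finally show ?thesis .
qed

lemma mst_exists:
  assumes "finite P"
  shows "\<exists>T. is_MST P T"
proof -
  have c: "conn P (edges_of P)" unfolding conn_def
  proof (intro ballI)
    fix x y assume "x \<in> P" "y \<in> P"
    show "(x, y) \<in> (edge_rel (edges_of P))\<^sup>*"
    proof (cases "x = y")
      case True then show ?thesis by simp
    next
      case False
      then have "{x, y} \<in> edges_of P" using \<open>x \<in> P\<close> \<open>y \<in> P\<close> by blast
      then show ?thesis by (rule rt_edge)
    qed
  qed
  obtain T0 where T0: "is_spanning_tree P T0"
    using exists_subtree[OF finite_edges_of[OF assms] _ c] by blast
  define ST where "ST = {T. is_spanning_tree P T}"
  have "ST \<subseteq> Pow (edges_of P)" unfolding ST_def using tree_sub by blast
  then have finST: "finite ST" using finite_edges_of[OF assms] by (meson finite_Pow_iff finite_subset)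
  have neST: "ST \<noteq> {}" unfolding ST_def using T0 by blast
  define T where "T = arg_min_on tree_weight ST"
  have TS: "T \<in> ST" and Tmin: "\<not>(\<exists>x\<in>ST. tree_weight x < tree_weight T)"
    using arg_min_if_finite[OF finST neST, of tree_weight] unfolding T_def by auto
  have "is_MST P T" unfolding is_MST_def
  proof (intro conjI allI impI)
    show "is_spanning_tree P T" using TS unfolding ST_def by simp
  next
    fix T' assume "is_spanning_tree P T'"
    then have "T' \<in> ST" unfolding ST_def by simp
    then show "tree_weight T \<le> tree_weight T'" using Tmin by force
  qed
  then show ?thesis by blast
qed


lemma finite_tree: "is_spanning_tree P T \<Longrightarrow> finite P \<Longrightarrow> finite T"
  by (rule finite_subset[OF tree_sub finite_edges_of])

lemma reps:
  assumes T: "is_spanning_tree P T" and finP: "finite P" and ne: "P \<noteq> {}" and L: "L \<subseteq> T"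
  shows "\<exists>R\<subseteq>P. card R = card L + 1 \<and> (\<forall>a\<in>R. \<forall>b\<in>R. a \<noteq> b \<longrightarrow> (a, b) \<notin> (edge_rel (T - L))\<^sup>*)
           \<and> (\<forall>p\<in>P. \<exists>c\<in>R. (p, c) \<in> (edge_rel (T - L))\<^sup>*)"
proof -
  have finT: "finite T" using finite_tree[OF T finP] .
  have finL: "finite L" using finite_subset[OF L finT] .
  show ?thesis using finL L
  proof (induction L rule: finite_subset_induct')
    case empty
    obtain p0 where p0: "p0 \<in> P" using ne by blast
    have "card {p0} = card ({}::'a set set) + 1" by simp
    moreover have "\<forall>a\<in>{p0}. \<forall>b\<in>{p0}. a \<noteq> b \<longrightarrow> (a, b) \<notin> (edge_rel (T - {}))\<^sup>*" by simp
    moreover have "\<forall>p\<in>P. \<exists>c\<in>{p0}. (p, c) \<in> (edge_rel (T - {}))\<^sup>*"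
      using conn_tree[OF T] p0 unfolding conn_def by simp
    ultimately show ?case using p0 by (intro exI[of _ "{p0}"] conjI) simp_all
  next
    case (insert e L)
    obtain R where R: "R \<subseteq> P" "card R = card L + 1"
      "\<forall>a\<in>R. \<forall>b\<in>R. a \<noteq> b \<longrightarrow> (a, b) \<notin> (edge_rel (T - L))\<^sup>*"
      "\<forall>p\<in>P. \<exists>c\<in>R. (p, c) \<in> (edge_rel (T - L))\<^sup>*" using insert.IH by blast
    have finR: "finite R" using R(2) card_gt_0_iff by fastforce
    have cardL: "card (insert e L) = card L + 1" using insert.hyps(1,4) by simp
    obtain x y where e: "e = {x, y}" "x \<in> P" "y \<in> P" "x \<noteq> y" using insert.hyps(2) tree_sub[OF T] by blast
    have eA: "e \<in> T - L" using insert.hyps(2,4) by blast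
    have gen: "\<exists>R\<subseteq>P. card R = card (insert e L) + 1 \<and> (\<forall>a\<in>R. \<forall>b\<in>R. a \<noteq> b \<longrightarrow> (a, b) \<notin> (edge_rel (T - insert e L))\<^sup>*)
           \<and> (\<forall>p\<in>P. \<exists>c\<in>R. (p, c) \<in> (edge_rel (T - insert e L))\<^sup>*)"
      if ab: "{a, b} = e" "a \<in> P" and c: "c \<in> R" "(a, c) \<in> (edge_rel (T - L))\<^sup>*"
        "(c, b) \<in> (edge_rel (T - insert e L))\<^sup>*" and nab: "(a, b) \<notin> (edge_rel (T - insert e L))\<^sup>*"
      for a b c
    proof -
      have eqA: "T - L - {{a, b}} = T - insert e L" using ab(1) by auto
      have subA: "T - insert e L \<subseteq> T - L" by blast
      have aR: "a \<notin> R"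
      proof
        assume aR: "a \<in> R"
        show False
        proof (cases "a = c")
          case True then show False using c(3) nab by simp
        next
          case False
          then have "(a, c) \<notin> (edge_rel (T - L))\<^sup>*" using R(3) aR c(1) by simp
          then show False using c(2) by simp
        qed
      qed
      have noconn: "(a, v) \<notin> (edge_rel (T - insert e L))\<^sup>*" if v: "v \<in> R" for v
      proof
        assume av: "(a, v) \<in> (edge_rel (T - insert e L))\<^sup>*"
        show False
        proof (cases "v = c")
          case True
          then have "(a, c) \<in> (edge_rel (T - insert e L))\<^sup>*" using av by simp
          then have "(a, b) \<in> (edge_rel (T - insert e L))\<^sup>*" using c(3) by (rule rtrancl_trans)
          then show False using nab by simp
        next
          case False
          have "(a, v) \<in> (edge_rel (T - L))\<^sup>*" using rt_mono[OF subA av] .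
          have ca: "(c, a) \<in> (edge_rel (T - L))\<^sup>*" using c(2) by (rule rt_sym)
          have cv: "(c, v) \<in> (edge_rel (T - L))\<^sup>*" using ca \<open>(a, v) \<in> (edge_rel (T - L))\<^sup>*\<close> by (rule rtrancl_trans)
          have "c \<noteq> v" using False by simp
          then have "(c, v) \<notin> (edge_rel (T - L))\<^sup>*" using R(3) c(1) v by simp
          then show False using cv by simp
        qed
      qed
      have card': "card (insert a R) = card (insert e L) + 1" using aR finR R(2) cardL by simp
      have pw: "\<forall>u\<in>insert a R. \<forall>v\<in>insert a R. u \<noteq> v \<longrightarrow> (u, v) \<notin> (edge_rel (T - insert e L))\<^sup>*"
      proof (intro ballI impI notI)
        fix u v assume u: "u \<in> insert a R" and v: "v \<in> insert a R" and uv: "u \<noteq> v"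
          and con: "(u, v) \<in> (edge_rel (T - insert e L))\<^sup>*"
        show False
        proof (cases "u = a")
          case True
          then have "v \<in> R" using v uv by blast
          then have "(a, v) \<notin> (edge_rel (T - insert e L))\<^sup>*" by (rule noconn)
          then show False using con True by simp
        next
          case ua: False
          show False
          proof (cases "v = a")
            case True
            then have "u \<in> R" using u ua by blast
            then have "(a, u) \<notin> (edge_rel (T - insert e L))\<^sup>*" by (rule noconn)
            then show False using rt_sym[OF con] True by simp
          next
            case False
            then have "u \<in> R" "v \<in> R" using u v ua by blast+
            then have "(u, v) \<notin> (edge_rel (T - L))\<^sup>*" using R(3) uv by simp
            then show False using rt_mono[OF subA con] by simp
          qed
        qed
      qed
      have dom: "\<forall>p\<in>P. \<exists>c\<in>insert a R. (p, c) \<in> (edge_rel (T - insert e L))\<^sup>*"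
      proof
        fix p assume "p \<in> P"
        then obtain c' where c': "c' \<in> R" "(p, c') \<in> (edge_rel (T - L))\<^sup>*" using R(4) by blast
        have "(p, c') \<in> (edge_rel (T - insert e L))\<^sup>* \<or> (p, a) \<in> (edge_rel (T - insert e L))\<^sup>*
              \<or> (p, b) \<in> (edge_rel (T - insert e L))\<^sup>*"
          using prefix_lemma[OF c'(2), where x=a and y=b] unfolding eqA .
        then show "\<exists>c\<in>insert a R. (p, c) \<in> (edge_rel (T - insert e L))\<^sup>*"
        proof (elim disjE)
          assume "(p, c') \<in> (edge_rel (T - insert e L))\<^sup>*" then show ?thesis by (rule bexI[where x=c', OF _ insertI2[OF c'(1)]])
        next
          assume "(p, a) \<in> (edge_rel (T - insert e L))\<^sup>*" then show ?thesis by (rule bexI[where x=a, OF _ insertI1])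
        next
          assume "(p, b) \<in> (edge_rel (T - insert e L))\<^sup>*"
          then have "(p, c) \<in> (edge_rel (T - insert e L))\<^sup>*" using rt_sym[OF c(3)] by (rule rtrancl_trans)
          then show ?thesis by (rule bexI[where x=c, OF _ insertI2[OF c(1)]])
        qed
      qed
      have X: "insert a R \<subseteq> P" using R(1) ab(2) by blast
      show ?thesis by (rule exI[of _ "insert a R"], intro conjI X card' pw dom)
    qed
    have bridge: "(x, y) \<notin> (edge_rel (T - insert e L))\<^sup>*"
    proof
      assume "(x, y) \<in> (edge_rel (T - insert e L))\<^sup>*"
      moreover have "T - insert e L \<subseteq> T - {{x, y}}" using e(1) by blast
      ultimately have "(x, y) \<in> (edge_rel (T - {{x, y}}))\<^sup>*" by (rule rt_mono[rotated])
      moreover have "{x, y} \<in> T" using insert.hyps(2) e(1) by simp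
      then have "(x, y) \<notin> (edge_rel (T - {{x, y}}))\<^sup>*" by (rule tree_bridge[OF T])
      ultimately show False by simp
    qed
    obtain c where c: "c \<in> R" "(x, c) \<in> (edge_rel (T - L))\<^sup>*" using R(4) e(2) by blast
    have eqA: "T - L - {{x, y}} = T - insert e L" using e(1) by auto
    have "(c, x) \<in> (edge_rel (T - insert e L))\<^sup>* \<or> (c, x) \<in> (edge_rel (T - insert e L))\<^sup>*
              \<or> (c, y) \<in> (edge_rel (T - insert e L))\<^sup>*"
      using prefix_lemma[OF rt_sym[OF c(2)], where x=x and y=y] unfolding eqA .
    then have "(c, x) \<in> (edge_rel (T - insert e L))\<^sup>* \<or> (c, y) \<in> (edge_rel (T - insert e L))\<^sup>*" by simp
    then show ?case
    proof
      assume cy: "(c, y) \<in> (edge_rel (T - insert e L))\<^sup>*"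
      show ?case by (rule gen[OF e(1)[symmetric] e(2) c cy bridge])
    next
      assume cx: "(c, x) \<in> (edge_rel (T - insert e L))\<^sup>*"
      have yx: "{y, x} = e" using e(1) by (simp add: insert_commute)
      have "(y, x) \<in> (edge_rel (T - L))\<^sup>*" using eA yx by (intro rt_edge) simp
      then have yc: "(y, c) \<in> (edge_rel (T - L))\<^sup>*" using c(2) by (rule rtrancl_trans)
      have "(y, x) \<notin> (edge_rel (T - insert e L))\<^sup>*"
      proof
        assume "(y, x) \<in> (edge_rel (T - insert e L))\<^sup>*"
        then have "(x, y) \<in> (edge_rel (T - insert e L))\<^sup>*" by (rule rt_sym)
        then show False using bridge by simp
      qed
      then show ?case by (rule gen[OF yx e(3) c(1) yc cx])
    qed
  qed
qed

lemma mst_far: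
  assumes M: "is_MST P T" and finP: "finite P" and r: "r > 0"
    and Ldef: "L = {e\<in>T. r \<le> edge_len e}"
    and ab: "a \<in> P" "b \<in> P" "a \<noteq> b" and nab: "(a, b) \<notin> (edge_rel (T - L))\<^sup>*"
  shows "r \<le> dist a b"
proof (rule ccontr)
  assume "\<not> r \<le> dist a b"
  then have dab: "dist a b < r" by simp
  have T: "is_spanning_tree P T" using M unfolding is_MST_def by simp
  have finT: "finite T" using finite_tree[OF T finP] .
  have LT: "L \<subseteq> T" using Ldef by blast
  have finL: "finite L" using finite_subset[OF LT finT] .
  define CL where "CL = {L0. L0 \<subseteq> L \<and> (a, b) \<notin> (edge_rel (T - L0))\<^sup>*}"
  have finCL: "finite CL" unfolding CL_def using finL by simp
  have LCL: "L \<in> CL" unfolding CL_def using nab by simp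
  have neCL: "CL \<noteq> {}" using LCL by auto
  define L0 where "L0 = arg_min_on card CL"
  have L0C: "L0 \<in> CL" and L0min: "\<not>(\<exists>x\<in>CL. card x < card L0)"
    using arg_min_if_finite[OF finCL neCL, of card] unfolding L0_def by auto
  have L0L: "L0 \<subseteq> L" using L0C unfolding CL_def by simp
  have nab0: "(a, b) \<notin> (edge_rel (T - L0))\<^sup>*" using L0C unfolding CL_def by simp
  have finL0: "finite L0" using finite_subset[OF L0L finL] .
  have abT: "(a, b) \<in> (edge_rel T)\<^sup>*" using conn_tree[OF T] ab(1,2) unfolding conn_def by simp
  have "L0 \<noteq> {}"
  proof
    assume "L0 = {}"
    then show False using nab0 abT by simp
  qed
  then obtain f where fL0: "f \<in> L0" by auto
  have ab1: "(a, b) \<in> (edge_rel (T - (L0 - {f})))\<^sup>*"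
  proof (rule ccontr)
    assume "(a, b) \<notin> (edge_rel (T - (L0 - {f})))\<^sup>*"
    then have "L0 - {f} \<in> CL" unfolding CL_def using L0L by auto
    moreover have "card (L0 - {f}) < card L0" using finL0 fL0 by (rule card_Diff1_less)
    ultimately show False using L0min by auto
  qed
  have fT: "f \<in> T" and fL: "f \<in> L" using fL0 L0L LT by auto
  obtain x y where f: "f = {x, y}" "x \<in> P" "y \<in> P" "x \<noteq> y" using fT tree_sub[OF T] by blast
  have eq: "T - (L0 - {f}) - {{x, y}} = T - L0" using f(1) fL0 by auto
  have pa: "(a, b) \<in> (edge_rel (T - L0))\<^sup>* \<or> (a, x) \<in> (edge_rel (T - L0))\<^sup>* \<or> (a, y) \<in> (edge_rel (T - L0))\<^sup>*"
    using prefix_lemma[OF ab1, where x=x and y=y] unfolding eq .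
  have pb: "(b, a) \<in> (edge_rel (T - L0))\<^sup>* \<or> (b, x) \<in> (edge_rel (T - L0))\<^sup>* \<or> (b, y) \<in> (edge_rel (T - L0))\<^sup>*"
    using prefix_lemma[OF rt_sym[OF ab1], where x=x and y=y] unfolding eq .
  have nba0: "(b, a) \<notin> (edge_rel (T - L0))\<^sup>*"
  proof
    assume "(b, a) \<in> (edge_rel (T - L0))\<^sup>*"
    then have "(a, b) \<in> (edge_rel (T - L0))\<^sup>*" by (rule rt_sym)
    then show False using nab0 by simp
  qed
  define T' where "T' = insert {a, b} (T - {f})"
  have subT': "T - L0 \<subseteq> T'" unfolding T'_def using fL0 by auto
  have abT': "(a, b) \<in> (edge_rel T')\<^sup>*" unfolding T'_def by (rule rt_edge) simp
  have baT': "(b, a) \<in> (edge_rel T')\<^sup>*" using abT' by (rule rt_sym)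
  have xyT': "(x, y) \<in> (edge_rel T')\<^sup>*"
  proof -
    have pa': "(a, x) \<in> (edge_rel (T - L0))\<^sup>* \<or> (a, y) \<in> (edge_rel (T - L0))\<^sup>*" using pa nab0 by simp
    have pb': "(b, x) \<in> (edge_rel (T - L0))\<^sup>* \<or> (b, y) \<in> (edge_rel (T - L0))\<^sup>*" using pb nba0 by simp
    show ?thesis
    proof (cases "(a, x) \<in> (edge_rel (T - L0))\<^sup>*")
      case ax: True
      show ?thesis
      proof (cases "(b, x) \<in> (edge_rel (T - L0))\<^sup>*")
        case True
        have "(a, b) \<in> (edge_rel (T - L0))\<^sup>*" using ax rt_sym[OF True] by (rule rtrancl_trans)
        then show ?thesis using nab0 by simp
      next
        case False
        then have by': "(b, y) \<in> (edge_rel (T - L0))\<^sup>*" using pb' by simp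
        have "(x, a) \<in> (edge_rel T')\<^sup>*" using rt_mono[OF subT' rt_sym[OF ax]] .
        then have "(x, b) \<in> (edge_rel T')\<^sup>*" using abT' by (rule rtrancl_trans)
        then show ?thesis using rt_mono[OF subT' by'] by (rule rtrancl_trans)
      qed
    next
      case nax: False
      then have ay: "(a, y) \<in> (edge_rel (T - L0))\<^sup>*" using pa' by simp
      show ?thesis
      proof (cases "(b, y) \<in> (edge_rel (T - L0))\<^sup>*")
        case True
        have "(a, b) \<in> (edge_rel (T - L0))\<^sup>*" using ay rt_sym[OF True] by (rule rtrancl_trans)
        then show ?thesis using nab0 by simp
      next
        case False
        then have bx: "(b, x) \<in> (edge_rel (T - L0))\<^sup>*" using pb' by simp
        have "(x, b) \<in> (edge_rel T')\<^sup>*" using rt_mono[OF subT' rt_sym[OF bx]] .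
        then have "(x, a) \<in> (edge_rel T')\<^sup>*" using baT' by (rule rtrancl_trans)
        then show ?thesis using rt_mono[OF subT' ay] by (rule rtrancl_trans)
      qed
    qed
  qed
  have sub: "(edge_rel T)\<^sup>* \<subseteq> (edge_rel T')\<^sup>*"
  proof (rule rel_sub_rt)
    fix u v assume uv: "{u, v} \<in> T"
    show "(u, v) \<in> (edge_rel T')\<^sup>*"
    proof (cases "{u, v} = f")
      case True
      then have "(u = x \<and> v = y) \<or> (u = y \<and> v = x)" using f(1) by (simp add: doubleton_eq_iff)
      then show ?thesis
      proof
        assume "u = x \<and> v = y" then show ?thesis using xyT' by simp
      next
        assume "u = y \<and> v = x" then show ?thesis using rt_sym[OF xyT'] by simp
      qed
    next
      case False
      then have "{u, v} \<in> T'" using uv unfolding T'_def by simp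
      then show ?thesis by (rule rt_edge)
    qed
  qed
  have connT': "conn P T'" using conn_tree[OF T] sub unfolding conn_def by (meson subsetD)
  have T'sub: "T' \<subseteq> edges_of P" unfolding T'_def using tree_sub[OF T] ab by blast
  have w1: "tree_weight T \<le> tree_weight T'" by (rule mst_le_conn[OF M finP T'sub connT'])
  have abnot: "{a, b} \<notin> T - {f}"
  proof
    assume abin: "{a, b} \<in> T - {f}"
    show False
    proof (cases "{a, b} \<in> L")
      case True
      then have "r \<le> edge_len {a, b}" using Ldef by simp
      then show False using dab by (simp add: edge_len_eq)
    next
      case False
      then have "{a, b} \<in> T - L" using abin by simp
      then have "(a, b) \<in> (edge_rel (T - L))\<^sup>*" by (rule rt_edge)
      then show False using nab by simp
    qed
  qed
  have finTf: "finite (T - {f})" using finT by simp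
  have "tree_weight T' = edge_len {a, b} + tree_weight (T - {f})"
    unfolding T'_def tree_weight_def using sum.insert[OF finTf abnot] by simp
  moreover have "tree_weight T = edge_len f + tree_weight (T - {f})"
    unfolding tree_weight_def using sum.remove[OF finT fT] by simp
  moreover have "r \<le> edge_len f" using fL Ldef by simp
  moreover have "edge_len {a, b} < r" using dab by (simp add: edge_len_eq)
  ultimately show False using w1 by linarith
qed

lemma packing_le:
  assumes "finite A" "A \<subseteq> S" "\<forall>x\<in>A. \<forall>y\<in>A. x \<noteq> y \<longrightarrow> ball x \<epsilon> \<inter> ball y \<epsilon> = {}"
  shows "enat (card A) \<le> packing_number S \<epsilon>"
  unfolding packing_number_def by (rule Sup_upper) (use assms in blast)

lemma mst_count:
  assumes M: "is_MST P T" and finP: "finite P" and PS: "P \<subseteq> S" and r: "r > 0"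
  shows "enat (card {e\<in>T. r \<le> edge_len e}) \<le> packing_number S (r / 2)"
proof (cases "P = {}")
  case True
  have T: "is_spanning_tree P T" using M unfolding is_MST_def by simp
  have "T = {}" using tree_sub[OF T] True by blast
  then show ?thesis by (simp add: zero_enat_def[symmetric])
next
  case False
  define L where "L = {e\<in>T. r \<le> edge_len e}"
  have T: "is_spanning_tree P T" using M unfolding is_MST_def by simp
  have LT: "L \<subseteq> T" unfolding L_def by blast
  obtain R where R: "R \<subseteq> P" "card R = card L + 1"
      "\<forall>a\<in>R. \<forall>b\<in>R. a \<noteq> b \<longrightarrow> (a, b) \<notin> (edge_rel (T - L))\<^sup>*"
    using reps[OF T finP False LT] by (elim exE conjE) simp
  have finR: "finite R" using finite_subset[OF R(1) finP] .
  have far: "r \<le> dist a b" if ab: "a \<in> R" "b \<in> R" "a \<noteq> b" for a b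
  proof -
    have "(a, b) \<notin> (edge_rel (T - L))\<^sup>*" using R(3) ab by simp
    moreover have "a \<in> P" "b \<in> P" using ab R(1) by auto
    ultimately show ?thesis using mst_far[OF M finP r L_def] ab(3) by simp
  qed
  have disj: "\<forall>x\<in>R. \<forall>y\<in>R. x \<noteq> y \<longrightarrow> ball x (r / 2) \<inter> ball y (r / 2) = {}"
  proof (intro ballI impI)
    fix x y assume xy: "x \<in> R" "y \<in> R" "x \<noteq> y"
    show "ball x (r / 2) \<inter> ball y (r / 2) = {}"
    proof (rule ccontr)
      assume "ball x (r / 2) \<inter> ball y (r / 2) \<noteq> {}"
      then obtain z where "dist x z < r / 2" "dist y z < r / 2" by auto
      then have "dist x y < r" using dist_triangle2[of x y z] by linarith
      then show False using far[OF xy] by simp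
    qed
  qed
  have RS: "R \<subseteq> S" using R(1) PS by blast
  have "enat (card R) \<le> packing_number S (r / 2)" by (rule packing_le[OF finR RS disj])
  moreover have "enat (card L) \<le> enat (card R)" using R(2) by simp
  ultimately show ?thesis unfolding L_def by (rule order_trans[rotated])
qed

lemma sum_rank_bound:
  fixes x :: "'b \<Rightarrow> real"
  assumes A: "A > 0" and q: "q > 0" and d: "d > 0"
  shows "finite T \<Longrightarrow> (\<forall>e\<in>T. x e > 0) \<Longrightarrow> (\<forall>r>0. real (card {f\<in>T. r \<le> x f}) \<le> A * r powr (-q))
    \<Longrightarrow> (\<Sum>e\<in>T. x e powr d) \<le> (\<Sum>j\<in>{1..card T}. (A / real j) powr (d / q))"
proof (induction "card T" arbitrary: T)
  case 0
  then have "T = {}" by simp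
  then show ?case by simp
next
  case (Suc n)
  have neT: "T \<noteq> {}" using Suc.hyps(2) by auto
  define e where "e = arg_min_on x T"
  have eT: "e \<in> T" and emin: "\<not>(\<exists>y\<in>T. x y < x e)"
    using arg_min_if_finite[OF Suc.prems(1) neT, of x] unfolding e_def by auto
  define T' where "T' = T - {e}"
  have finT': "finite T'" unfolding T'_def using Suc.prems(1) by simp
  have cT': "n = card T'" unfolding T'_def using Suc.hyps(2) Suc.prems(1) eT by simp
  have pos': "\<forall>e\<in>T'. x e > 0" unfolding T'_def using Suc.prems(2) by simp
  have cnt': "\<forall>r>0. real (card {f\<in>T'. r \<le> x f}) \<le> A * r powr (-q)"
  proof (intro allI impI)
    fix r :: real assume r: "r > 0"
    have "card {f\<in>T'. r \<le> x f} \<le> card {f\<in>T. r \<le> x f}"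
      proof (rule card_mono)
      show "finite {f \<in> T. r \<le> x f}" using Suc.prems(1) by simp
      show "{f \<in> T'. r \<le> x f} \<subseteq> {f \<in> T. r \<le> x f}" unfolding T'_def by blast
    qed
    then have c1: "real (card {f\<in>T'. r \<le> x f}) \<le> real (card {f\<in>T. r \<le> x f})" by simp
    have c2: "real (card {f\<in>T. r \<le> x f}) \<le> A * r powr (-q)" using Suc.prems(3) r by simp
    show "real (card {f\<in>T'. r \<le> x f}) \<le> A * r powr (-q)" using c1 c2 by linarith
  qed
  have IH: "(\<Sum>e\<in>T'. x e powr d) \<le> (\<Sum>j\<in>{1..n}. (A / real j) powr (d / q))"
    using Suc.hyps(1)[OF cT' finT' pos' cnt'] cT' by simp
  have xe: "x e > 0" using Suc.prems(2) eT by simp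
  have "{f\<in>T. x e \<le> x f} = T" using emin by force
  moreover have "real (card {f\<in>T. x e \<le> x f}) \<le> A * x e powr (-q)" using Suc.prems(3) xe by simp
  ultimately have "real (Suc n) \<le> A * x e powr (-q)" using Suc.hyps(2) by simp
  then have "real (Suc n) \<le> A / x e powr q" by (simp add: powr_minus_divide)
  then have xq: "x e powr q \<le> A / real (Suc n)" using xe A
    by (simp add: field_simps)
  have "x e powr d = (x e powr q) powr (d / q)" using q by (simp add: powr_powr)
  also have "\<dots> \<le> (A / real (Suc n)) powr (d / q)"
    by (rule powr_mono2) (use q d xq in auto)
  finally have xd: "x e powr d \<le> (A / real (Suc n)) powr (d / q)" .
  have "(\<Sum>e\<in>T. x e powr d) = x e powr d + (\<Sum>e\<in>T'. x e powr d)"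
    unfolding T'_def using sum.remove[OF Suc.prems(1) eT] by simp
  also have "\<dots> \<le> (A / real (Suc n)) powr (d / q) + (\<Sum>j\<in>{1..n}. (A / real j) powr (d / q))"
    using xd IH by linarith
  also have "\<dots> = (\<Sum>j\<in>{1..card T}. (A / real j) powr (d / q))"
    using Suc.hyps(2)[symmetric] by simp
  finally show ?case .
qed

lemma partial_zeta_bound:
  fixes p :: real
  assumes p: "p > 1" and A: "A > 0"
  shows "(\<Sum>j\<in>{1..m}. (A / real j) powr p) \<le> A powr p * (\<Sum>n. real n powr (-p))"
proof -
  have summ: "summable (\<lambda>n. real n powr (-p))" using summable_real_powr_iff p by simp
  have "(\<Sum>j\<in>{1..m}. (A / real j) powr p) = (\<Sum>j\<in>{1..m}. A powr p * real j powr (-p))"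
  proof (rule sum.cong)
    fix j assume "j \<in> {1..m}"
    then have "real j > 0" by simp
    then show "(A / real j) powr p = A powr p * real j powr (-p)"
      by (simp add: powr_divide powr_minus_divide)
  qed simp
  also have "\<dots> = A powr p * (\<Sum>j\<in>{1..m}. real j powr (-p))" by (simp add: sum_distrib_left)
  also have "\<dots> \<le> A powr p * (\<Sum>n. real n powr (-p))"
    by (rule mult_left_mono[OF sum_le_suminf[OF summ]]) auto
  finally show ?thesis .
qed

definition is_packing :: "'a::metric_space set \<Rightarrow> real \<Rightarrow> 'a set \<Rightarrow> bool" where
  "is_packing S e A \<longleftrightarrow> finite A \<and> A \<subseteq> S \<and> (\<forall>x\<in>A. \<forall>y\<in>A. x \<noteq> y \<longrightarrow> ball x e \<inter> ball y e = {})"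

lemma pn_alt: "packing_number S e = Sup ((\<lambda>A. enat (card A)) ` {A. is_packing S e A})"
  unfolding packing_number_def is_packing_def by (simp only: setcompr_eq_image)

lemma packing_mono:
  assumes "0 < e1" "e1 \<le> e2"
  shows "packing_number S e2 \<le> packing_number S e1"
proof -
  have "{A. is_packing S e2 A} \<subseteq> {A. is_packing S e1 A}"
  proof
    fix A assume "A \<in> {A. is_packing S e2 A}"
    then have A: "finite A" "A \<subseteq> S" "\<forall>x\<in>A. \<forall>y\<in>A. x \<noteq> y \<longrightarrow> ball x e2 \<inter> ball y e2 = {}"
      unfolding is_packing_def by auto
    have "\<forall>x\<in>A. \<forall>y\<in>A. x \<noteq> y \<longrightarrow> ball x e1 \<inter> ball y e1 = {}"
    proof (intro ballI impI)
      fix x y assume "x \<in> A" "y \<in> A" "x \<noteq> y"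
      then have "ball x e2 \<inter> ball y e2 = {}" using A(3) by blast
      moreover have "ball x e1 \<subseteq> ball x e2" "ball y e1 \<subseteq> ball y e2" using assms by auto
      ultimately show "ball x e1 \<inter> ball y e1 = {}" by blast
    qed
    then show "A \<in> {A. is_packing S e1 A}" using A(1,2) unfolding is_packing_def by simp
  qed
  then show ?thesis unfolding pn_alt by (intro Sup_subset_mono image_mono)
qed

lemma packing_bounded:
  assumes K: "packing_number S \<epsilon> = enat K" and e: "\<epsilon> > 0"
  shows "bounded S"
proof -
  define PS where "PS = (\<lambda>A. enat (card A)) ` {A. is_packing S \<epsilon> A}"
  have SupPS: "Sup PS = enat K" using K unfolding pn_alt PS_def .
  have le: "\<forall>z\<in>PS. z \<le> enat K"
  proof
    fix z assume "z \<in> PS"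
    then have "z \<le> Sup PS" by (rule Sup_upper)
    then show "z \<le> enat K" using SupPS by simp
  qed
  have "PS \<subseteq> enat ` {..K}"
  proof
    fix z assume z: "z \<in> PS"
    then obtain n where n: "z = enat n" unfolding PS_def by blast
    have "enat n \<le> enat K" using le z n by blast
    then have "n \<le> K" by simp
    then show "z \<in> enat ` {..K}" using n by simp
  qed
  then have finPS: "finite PS" by (rule finite_subset) simp
  have "is_packing S \<epsilon> {}" unfolding is_packing_def by simp
  then have nePS: "PS \<noteq> {}" unfolding PS_def by blast
  have "Sup PS \<in> PS"
  proof (rule finite_Sup_in[OF finPS nePS])
    fix x y assume "x \<in> PS" "y \<in> PS"
    then show "sup x y \<in> PS" by (simp add: sup_max max_def)
  qed
  then obtain A where A0: "enat K = enat (card A)" "is_packing S \<epsilon> A"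
    unfolding SupPS unfolding PS_def by blast
  have A: "card A = K" "finite A" "A \<subseteq> S"
      "\<forall>x\<in>A. \<forall>y\<in>A. x \<noteq> y \<longrightarrow> ball x \<epsilon> \<inter> ball y \<epsilon> = {}"
    using A0 unfolding is_packing_def by auto
  have cover: "S \<subseteq> (\<Union>a\<in>A. ball a (2 * \<epsilon>))"
  proof
    fix z assume zS: "z \<in> S"
    show "z \<in> (\<Union>a\<in>A. ball a (2 * \<epsilon>))"
    proof (rule ccontr)
      assume "z \<notin> (\<Union>a\<in>A. ball a (2 * \<epsilon>))"
      then have far: "\<forall>a\<in>A. 2 * \<epsilon> \<le> dist a z" by (auto simp: not_less)
      have zA: "z \<notin> A"
      proof
        assume "z \<in> A"
        then have "2 * \<epsilon> \<le> dist z z" using far by blast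
        then show False using e by simp
      qed
      have "\<forall>x\<in>insert z A. \<forall>y\<in>insert z A. x \<noteq> y \<longrightarrow> ball x \<epsilon> \<inter> ball y \<epsilon> = {}"
      proof (intro ballI impI)
        fix x y assume x: "x \<in> insert z A" and y: "y \<in> insert z A" and xy: "x \<noteq> y"
        show "ball x \<epsilon> \<inter> ball y \<epsilon> = {}"
        proof (cases "x = z \<or> y = z")
          case True
          have d2: "2 * \<epsilon> \<le> dist x y"
          proof (cases "x = z")
            case True
            then have "y \<in> A" using y xy by simp
            then show ?thesis using far True by (simp add: dist_commute)
          next
            case False
            then have "y = z" "x \<in> A" using x \<open>x = z \<or> y = z\<close> by auto
            then show ?thesis using far by simp
          qed
          show ?thesis
          proof (rule ccontr)
            assume "ball x \<epsilon> \<inter> ball y \<epsilon> \<noteq> {}"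
            then obtain w where "dist x w < \<epsilon>" "dist y w < \<epsilon>" by auto
            then have "dist x y < 2 * \<epsilon>" using dist_triangle2[of x y w] by linarith
            then show False using d2 by simp
          qed
        next
          case False
          then have "x \<in> A" "y \<in> A" using x y by auto
          then show ?thesis using A(4) xy by simp
        qed
      qed
      then have "is_packing S \<epsilon> (insert z A)" unfolding is_packing_def using A(2,3) zS by simp
      then have "enat (card (insert z A)) \<in> PS" unfolding PS_def by blast
      then have "enat (card (insert z A)) \<le> enat K" using le by blast
      moreover have "card (insert z A) = K + 1" using A(1,2) zA by simp
      ultimately show False by simp
    qed
  qed
  have "bounded (\<Union>a\<in>A. ball a (2 * \<epsilon>))" using A(2) by (simp add: bounded_UN)
  then show ?thesis using cover bounded_subset by blast
qed

lemma ratio_small: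
  assumes e: "0 < \<epsilon>" "\<epsilon> < 1" and br: "box_ratio S \<epsilon> < ereal q"
  shows "\<exists>n. packing_number S \<epsilon> = enat n \<and> real n \<le> \<epsilon> powr (-q)"
proof (cases "packing_number S \<epsilon>")
  case (enat n)
  have L: "ln (1 / \<epsilon>) > 0" using e by simp
  have l1: "ln (1 / \<epsilon>) = - ln \<epsilon>" using e by (simp add: ln_div)
  have "ln (real n) / ln (1 / \<epsilon>) < q" using br enat unfolding box_ratio_def by simp
  then have "ln (real n) < q * ln (1 / \<epsilon>)" using L by (simp add: pos_divide_less_eq)
  also have "\<dots> = ln (\<epsilon> powr (-q))" using l1 by simp
  finally have lt: "ln (real n) < ln (\<epsilon> powr (-q))" .
  have "real n \<le> \<epsilon> powr (-q)"
  proof (cases "n = 0")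
    case True then show ?thesis by simp
  next
    case False
    then have a: "real n > 0" by simp
    have b: "\<epsilon> powr (-q) > 0" using e by simp
    have "ln (real n) < ln (\<epsilon> powr (-q)) \<longleftrightarrow> real n < \<epsilon> powr (-q)" by (rule ln_less_cancel_iff[OF a b])
    then show ?thesis using lt by simp
  qed
  then show ?thesis using enat by blast
next
  case infinity
  then show ?thesis using br unfolding box_ratio_def by simp
qed

lemma ratio_le:
  assumes e: "0 < \<epsilon>" "\<epsilon> < 1" and pn: "packing_number S \<epsilon> = enat n"
    and nb: "real n \<le> \<epsilon> powr (-t)" and t: "t \<ge> 0"
  shows "box_ratio S \<epsilon> \<le> ereal t"
proof -
  have L: "ln (1 / \<epsilon>) > 0" using e by simp
  have l1: "ln (1 / \<epsilon>) = - ln \<epsilon>" using e by (simp add: ln_div)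
  have "ln (real n) \<le> t * ln (1 / \<epsilon>)"
  proof (cases "n = 0")
    case True then show ?thesis using t L by simp
  next
    case False
    then have a: "real n > 0" by simp
    have b: "\<epsilon> powr (-t) > 0" using e by simp
    have "ln (real n) \<le> ln (\<epsilon> powr (-t)) \<longleftrightarrow> real n \<le> \<epsilon> powr (-t)" by (rule ln_le_cancel_iff[OF a b])
    then have "ln (real n) \<le> ln (\<epsilon> powr (-t))" using nb by blast
    also have "\<dots> = t * ln (1 / \<epsilon>)" using l1 by simp
    finally show ?thesis .
  qed
  then have "ln (real n) / ln (1 / \<epsilon>) \<le> t" using L by (simp add: pos_divide_le_eq)
  then show ?thesis using pn unfolding box_ratio_def by simp
qed

lemma mst_upper:
  assumes q: "q > 0" and dq: "d > q"
    and ev: "eventually (\<lambda>\<epsilon>. box_ratio S \<epsilon> < ereal q) (at_right 0)"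
  shows "\<exists>C. \<forall>P T. finite P \<and> P \<subseteq> S \<and> is_MST P T \<longrightarrow> E_pow d T \<le> C"
proof -
  obtain b where b: "b > 0" "\<And>\<epsilon>. \<epsilon> > 0 \<Longrightarrow> \<epsilon> < b \<Longrightarrow> box_ratio S \<epsilon> < ereal q"
    using ev unfolding eventually_at_right_field by auto
  define e1 where "e1 = min b (1/2)"
  have e1: "0 < e1" "e1 \<le> b" "e1 < 1" unfolding e1_def using b(1) by auto
  have Nb: "\<exists>n. packing_number S \<epsilon> = enat n \<and> real n \<le> \<epsilon> powr (-q)" if "0 < \<epsilon>" "\<epsilon> < e1" for \<epsilon>
  proof (rule ratio_small)
    show "0 < \<epsilon>" using that by simp
    show "\<epsilon> < 1" using that e1 by simp
    show "box_ratio S \<epsilon> < ereal q" using b(2) that e1 by simp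
  qed
  define e2 where "e2 = e1 / 2"
  have e2: "0 < e2" "e2 < e1" unfolding e2_def using e1 by auto
  obtain K where K: "packing_number S e2 = enat K" using Nb[OF e2] by auto
  have bS: "bounded S" by (rule packing_bounded[OF K e2(1)])
  obtain D where D: "\<forall>x\<in>S. \<forall>y\<in>S. dist x y \<le> D" using bS unfolding bounded_two_points by auto
  define D' where "D' = max D 1"
  have D': "D' > 0" "D \<le> D'" unfolding D'_def by auto
  define A where "A = 2 powr q + real K * D' powr q"
  have A2: "2 powr q \<le> A" unfolding A_def by simp
  have A0: "A > 0" using A2 by (smt (verit) powr_gt_zero)
  define C where "C = A powr (d / q) * (\<Sum>n. real n powr (-(d / q)))"
  have dpos: "d > 0" using q dq by simp
  have dq1: "d / q > 1" using q dq by simp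
  show ?thesis
  proof (rule exI[of _ C], intro allI impI, elim conjE)
    fix P T assume finP: "finite P" and PS: "P \<subseteq> S" and M: "is_MST P T"
    have T: "is_spanning_tree P T" using M unfolding is_MST_def by simp
    have finT: "finite T" by (rule finite_tree[OF T finP])
    have pos: "\<forall>e\<in>T. edge_len e > 0"
    proof
      fix e assume "e \<in> T"
      then obtain x y where "e = {x, y}" "x \<noteq> y" using tree_sub[OF T] by blast
      then show "edge_len e > 0" by (simp add: edge_len_eq)
    qed
    have cnt: "\<forall>r>0. real (card {f\<in>T. r \<le> edge_len f}) \<le> A * r powr (-q)"
    proof (intro allI impI)
      fix r :: real assume r: "r > 0"
      have mc: "enat (card {f\<in>T. r \<le> edge_len f}) \<le> packing_number S (r / 2)"
        by (rule mst_count[OF M finP PS r])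
      have rq: "0 < r powr (-q)" using r by simp
      show "real (card {f\<in>T. r \<le> edge_len f}) \<le> A * r powr (-q)"
      proof (cases "r / 2 < e1")
        case True
        obtain n where n: "packing_number S (r / 2) = enat n" "real n \<le> (r / 2) powr (-q)"
          using Nb[of "r / 2"] r True by auto
        have "card {f\<in>T. r \<le> edge_len f} \<le> n" using mc n(1) by simp
        then have "real (card {f\<in>T. r \<le> edge_len f}) \<le> (r / 2) powr (-q)" using n(2) by linarith
        also have "(r / 2) powr (-q) = 2 powr q * r powr (-q)"
          by (simp add: powr_divide powr_minus_divide)
        also have "\<dots> \<le> A * r powr (-q)" by (rule mult_right_mono[OF A2]) (use rq in simp)
        finally show ?thesis .
      next
        case False
        show ?thesis
        proof (cases "r \<le> D'")
          case True
          have "packing_number S (r / 2) \<le> packing_number S e2"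
            by (rule packing_mono) (use e2 False in auto)
          then have "enat (card {f\<in>T. r \<le> edge_len f}) \<le> enat K" using mc K by (metis order_trans)
          then have cK: "real (card {f\<in>T. r \<le> edge_len f}) \<le> real K" by simp
          have "r powr q \<le> D' powr q" by (rule powr_mono2) (use q r True in auto)
          then have "1 \<le> D' powr q * r powr (-q)" using r by (simp add: powr_minus_divide)
          then have "real K \<le> real K * (D' powr q * r powr (-q))" by (simp add: mult_le_cancel_left1)
          also have "\<dots> \<le> A * r powr (-q)" unfolding A_def using rq
            by (simp add: algebra_simps)
          finally show ?thesis using cK by linarith
        next
          case False
          have "{f\<in>T. r \<le> edge_len f} = {}"
          proof (rule ccontr)
            assume "{f\<in>T. r \<le> edge_len f} \<noteq> {}"
            then obtain f where f: "f \<in> T" "r \<le> edge_len f" by blast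
            then obtain x y where xy: "f = {x, y}" "x \<in> P" "y \<in> P" using tree_sub[OF T] by blast
            have "dist x y \<le> D" using D xy PS by blast
            then show False using f(2) xy(1) False D'(2) by (simp add: edge_len_eq)
          qed
          then have c0: "card {f\<in>T. r \<le> edge_len f} = 0" by (simp only: card.empty)
          have "0 \<le> A * r powr (-q)" using A0 rq by simp
          then show ?thesis unfolding c0 by simp
        qed
      qed
    qed
    have "E_pow d T \<le> (\<Sum>j\<in>{1..card T}. (A / real j) powr (d / q))"
      unfolding E_pow_def by (rule sum_rank_bound[where x=edge_len, OF A0 q dpos finT pos cnt])
    also have "\<dots> \<le> C" unfolding C_def by (rule partial_zeta_bound[OF dq1 A0])
    finally show "E_pow d T \<le> C" .
  qed
qed

lemma packing_count_bound:
  assumes d: "d \<ge> 0" and C: "\<forall>P T. finite P \<and> P \<subseteq> S \<and> is_MST P T \<longrightarrow> E_pow d T \<le> C"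
    and e: "\<epsilon> > 0" and A: "is_packing S \<epsilon> A" and C0: "C \<ge> 0"
  shows "real (card A) \<le> C * \<epsilon> powr (-d) + 1"
proof (cases "A = {}")
  case True
  have "0 \<le> C * \<epsilon> powr (-d)" using C0 by simp
  then show ?thesis using True by simp
next
  case False
  have finA: "finite A" and AS: "A \<subseteq> S"
    and disj: "\<forall>x\<in>A. \<forall>y\<in>A. x \<noteq> y \<longrightarrow> ball x \<epsilon> \<inter> ball y \<epsilon> = {}"
    using A unfolding is_packing_def by auto
  obtain T where M: "is_MST A T" using mst_exists[OF finA] by blast
  have T: "is_spanning_tree A T" using M unfolding is_MST_def by simp
  have finT: "finite T" by (rule finite_tree[OF T finA])
  obtain p0 where p0: "p0 \<in> A" using False by blast
  have dom: "\<forall>p\<in>A. \<exists>r\<in>{p0}. (p, r) \<in> (edge_rel T)\<^sup>*"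
    using conn_tree[OF T] p0 unfolding conn_def by simp
  have cA: "card A \<le> card {p0} + card T"
    by (rule lemma_D[OF finT tree_sub[OF T]]) (use p0 dom in auto)
  have lb: "\<epsilon> powr d \<le> edge_len e powr d" if eT: "e \<in> T" for e
  proof -
    obtain x y where xy: "e = {x, y}" "x \<in> A" "y \<in> A" "x \<noteq> y" using eT tree_sub[OF T] by blast
    have le: "\<epsilon> \<le> dist x y"
    proof (rule ccontr)
      assume "\<not> \<epsilon> \<le> dist x y"
      then have "x \<in> ball x \<epsilon> \<inter> ball y \<epsilon>" using e by (simp add: dist_commute)
      then show False using disj xy by blast
    qed
    show ?thesis unfolding xy(1) edge_len_eq by (rule powr_mono2[OF d _ le]) (use e in simp)
  qed
  have "real (card T) * \<epsilon> powr d \<le> E_pow d T"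
    unfolding E_pow_def using lb by (rule sum_bounded_below)
  also have "\<dots> \<le> C" using C finA AS M by blast
  finally have "real (card T) * \<epsilon> powr d \<le> C" .
  then have "real (card T) \<le> C / \<epsilon> powr d" using e by (simp add: pos_le_divide_eq)
  also have "\<dots> = C * \<epsilon> powr (-d)" by (simp add: powr_minus_divide)
  finally show ?thesis using cA by simp
qed

lemma box_upper:
  assumes Sne: "S \<noteq> {}" and d: "d \<ge> 0" and dd: "d' > d"
    and C: "\<forall>P T. finite P \<and> P \<subseteq> S \<and> is_MST P T \<longrightarrow> E_pow d T \<le> C"
  shows "eventually (\<lambda>\<epsilon>. box_ratio S \<epsilon> \<le> ereal d') (at_right 0)"
proof -
  obtain s where s: "s \<in> S" using Sne by blast
  obtain T0 where M0: "is_MST {s} T0" using mst_exists[of "{s}"] by auto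
  have "0 \<le> E_pow d T0" unfolding E_pow_def by (rule sum_nonneg) simp
  also have "\<dots> \<le> C" using C s M0 by blast
  finally have C0: "0 \<le> C" .
  have pn: "\<exists>n. packing_number S \<epsilon> = enat n \<and> real n \<le> C * \<epsilon> powr (-d) + 1" if e: "\<epsilon> > 0" for \<epsilon>
  proof -
    define M where "M = nat \<lfloor>C * \<epsilon> powr (-d) + 1\<rfloor>"
    have Bpos: "0 \<le> C * \<epsilon> powr (-d) + 1" using C0 by simp
    have "packing_number S \<epsilon> \<le> enat M"
      unfolding pn_alt
    proof (rule Sup_least)
      fix z assume "z \<in> (\<lambda>A. enat (card A)) ` {A. is_packing S \<epsilon> A}"
      then obtain A where z: "z = enat (card A)" and A: "is_packing S \<epsilon> A" by blast
      have "real (card A) \<le> C * \<epsilon> powr (-d) + 1" by (rule packing_count_bound[OF d C e A C0])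
      then have "card A \<le> M" unfolding M_def by (rule le_nat_floor)
      then show "z \<le> enat M" using z by simp
    qed
    then obtain n where n: "packing_number S \<epsilon> = enat n" "n \<le> M"
      by (cases "packing_number S \<epsilon>") auto
    have "real M \<le> C * \<epsilon> powr (-d) + 1"
    proof -
      define B where "B = C * \<epsilon> powr (-d) + 1"
      have B0: "0 \<le> B" using Bpos unfolding B_def .
      have f0: "0 \<le> \<lfloor>B\<rfloor>" using B0 by simp
      have "real (nat \<lfloor>B\<rfloor>) = real_of_int \<lfloor>B\<rfloor>" using f0 by simp
      also have "\<dots> \<le> B" by (rule of_int_floor_le)
      finally show ?thesis unfolding M_def B_def .
    qed
    then have "real n \<le> C * \<epsilon> powr (-d) + 1" using n(2) by (meson of_nat_le_iff order_trans)
    then show ?thesis using n(1) by blast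
  qed
  define g where "g = d' - d"
  have g: "g > 0" unfolding g_def using dd by simp
  define \<delta> where "\<delta> = min (1/2) ((1 / (C + 1)) powr (1 / g))"
  have \<delta>: "\<delta> > 0" unfolding \<delta>_def using C0 by simp
  show ?thesis unfolding eventually_at_right_field
  proof (intro exI[of _ \<delta>] conjI allI impI)
    show "\<delta> > 0" by (rule \<delta>)
  next
    fix \<epsilon> :: real assume e: "\<epsilon> > 0" "\<epsilon> < \<delta>"
    have e1: "\<epsilon> < 1" using e unfolding \<delta>_def by simp
    have lt: "\<epsilon> < (1 / (C + 1)) powr (1 / g)" using e unfolding \<delta>_def by simp
    have "\<epsilon> powr g < ((1 / (C + 1)) powr (1 / g)) powr g"
      by (rule powr_less_mono2[OF g _ lt]) (use e in simp)
    also have "\<dots> = 1 / (C + 1)" using g C0 by (simp add: powr_powr)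
    finally have eg: "\<epsilon> powr g < 1 / (C + 1)" .
    then have "(C + 1) * \<epsilon> powr g < 1" using C0 by (simp add: field_simps)
    then have C1: "C + 1 \<le> \<epsilon> powr (-g)" using e by (simp add: powr_minus_divide field_simps)
    have ed1: "1 \<le> \<epsilon> powr (-d)"
    proof -
      have "1 \<le> (1 / \<epsilon>) powr d" by (rule ge_one_powr_ge_zero) (use e e1 d in simp_all)
      then show ?thesis by (simp add: powr_divide powr_minus_divide)
    qed
    have "C * \<epsilon> powr (-d) + 1 \<le> (C + 1) * \<epsilon> powr (-d)" using ed1 by (simp add: algebra_simps)
    also have "\<dots> \<le> \<epsilon> powr (-g) * \<epsilon> powr (-d)"
      by (rule mult_right_mono[OF C1]) simp
    also have "\<dots> = \<epsilon> powr (-d')" unfolding g_def by (simp add: powr_add[symmetric])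
    finally have B: "C * \<epsilon> powr (-d) + 1 \<le> \<epsilon> powr (-d')" .
    obtain n where n: "packing_number S \<epsilon> = enat n" "real n \<le> C * \<epsilon> powr (-d) + 1" using pn[OF e(1)] by blast
    show "box_ratio S \<epsilon> \<le> ereal d'"
      by (rule ratio_le[OF e(1) e1 n(1)]) (use n(2) B d dd in auto)
  qed
qed

lemma box_nonneg:
  assumes "S \<noteq> {}"
  shows "0 \<le> dim_Box S"
  unfolding dim_Box_def
proof (rule le_Limsup)
  show "at_right (0::real) \<noteq> bot" by simp
  show "\<forall>\<^sub>F x in at_right 0. 0 \<le> box_ratio S x"
    unfolding eventually_at_right_field
  proof (intro exI[of _ 1] conjI allI impI)
    fix e :: real assume e: "0 < e" "e < 1"
    show "0 \<le> box_ratio S e"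
    proof (cases "packing_number S e")
      case (enat n)
      have "0 \<le> ln (real n)" by (cases n) auto
      moreover have "0 < ln (1 / e)" using e by simp
      ultimately show ?thesis using enat unfolding box_ratio_def by simp
    next
      case infinity
      then show ?thesis unfolding box_ratio_def by simp
    qed
  qed simp
qed

theorem theorem2:
  fixes S :: "'a::metric_space set"
  assumes "S \<noteq> {}"
  shows "dim_MST S = dim_Box S"
proof (rule antisym)
  define DS where "DS = {d. d \<ge> 0 \<and> (\<exists>C. \<forall>P T. finite P \<and> P \<subseteq> S \<and> is_MST P T \<longrightarrow> E_pow d T \<le> C)}"
  have MST: "dim_MST S = Inf (ereal ` DS)" unfolding dim_MST_def DS_def ..
  show "dim_Box S \<le> dim_MST S"
    unfolding MST
  proof (rule Inf_greatest)
    fix z assume "z \<in> ereal ` DS"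
    then obtain d where z: "z = ereal d" and dD: "d \<in> DS" by blast
    obtain C where d: "d \<ge> 0" and C: "\<forall>P T. finite P \<and> P \<subseteq> S \<and> is_MST P T \<longrightarrow> E_pow d T \<le> C"
      using dD unfolding DS_def by blast
    have "dim_Box S \<le> ereal d + ereal e" if e: "0 < e" for e :: real
    proof -
      have "eventually (\<lambda>\<epsilon>. box_ratio S \<epsilon> \<le> ereal (d + e)) (at_right 0)"
        by (rule box_upper[OF assms d _ C]) (use e in simp)
      then have "dim_Box S \<le> ereal (d + e)" unfolding dim_Box_def by (rule Limsup_bounded)
      then show ?thesis by simp
    qed
    then have "dim_Box S \<le> ereal d" by (rule ereal_le_epsilon2)
    then show "dim_Box S \<le> z" using z by simp
  qed
  have key: "dim_MST S \<le> ereal t" if t: "t > 0" "dim_Box S < ereal t" for t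
  proof -
    obtain q' where q': "dim_Box S < ereal q'" "ereal q' < ereal t" using ereal_dense2[OF t(2)] by blast
    define q where "q = max q' (t / 2)"
    have q12: "q > 0" "q < t" using q' t unfolding q_def by auto
    have "ereal q' \<le> ereal q" unfolding q_def by simp
    then have "dim_Box S < ereal q" using q'(1) by (rule order_less_le_trans[rotated])
    note q = q12 this
    have ev: "eventually (\<lambda>\<epsilon>. box_ratio S \<epsilon> < ereal q) (at_right 0)"
      using q(3) unfolding dim_Box_def by (rule Limsup_lessD)
    obtain C where "\<forall>P T. finite P \<and> P \<subseteq> S \<and> is_MST P T \<longrightarrow> E_pow t T \<le> C"
      using mst_upper[OF q(1) q(2) ev] by blast
    then have "t \<in> DS" unfolding DS_def using t by auto
    then show ?thesis unfolding MST by (rule INF_lower)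
  qed
  show "dim_MST S \<le> dim_Box S"
  proof (rule ccontr)
    assume "\<not> dim_MST S \<le> dim_Box S"
    then have lt: "dim_Box S < dim_MST S" by simp
    obtain t where t: "dim_Box S < ereal t" "ereal t < dim_MST S" using ereal_dense2[OF lt] by blast
    have "(0::ereal) < ereal t" using box_nonneg[OF assms] t(1) by (rule order_le_less_trans)
    then have "0 < t" by simp
    then have "dim_MST S \<le> ereal t" using key t(1) by blast
    then show False using t(2) by simp
  qed
qed

end
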